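(* Let $L\subseteq Q$ be a dense extension of symmetric Leibniz algebras, with $L$ semiprime and $\mathrm{ran}(Q)=\mathrm{lan}(Q)=\{0\}$. If $\mathscr{A}(Q)$ is strong right ideally absorbed into $\mathscr{A}_0$, then $\mathscr{A}(Q)$ is a left quotient algebra of $\mathscr{A}_0$.
   Context: A symmetric Leibniz algebra satisfies both $[x,[y,z]]=[[x,y],z]-[[x,z],y]$ and $[x,[y,z]]=[[x,y],z]+[y,[x,z]]$. $L$ semiprime: $[I,I]\ne\{0\}$ for each nonzero ideal $I$ of $L$. $\mathrm{lan}(Q)=\{x:[x,Q]=0\}$, $\mathrm{ran}(Q)=\{x:[Q,x]=0\}$. For $x\in Q$, $R_x(u)=[u,x]$, $L_x(u)=[x,u]$; $M(Q)$ is the associative subalgebra of $\mathrm{End}(Q)$ generated by the identity and all $R_x,L_x$; $L$ is dense in $Q$ if the only $\mu\in M(Q)$ with $\mu(L)=\{0\}$ is $0$. $\mathscr{A}(Q)$ is the associative subalgebra generated by all $R_x,L_x$, $\mathscr{A}_0=\{\mu\in\mathscr{A}(Q):\mu(L)\subseteq L\}$. An associative algebra $S$ is strong right ideally absorbed into a subalgebra $A$ if for any $p,q\in S\setminus\{0\}$ there is a two-sided ideal $I$ of $A$ with $\{a\in A:aI=0\}=\{0\}$ such that $pI\ne\{0\}$ or $qI\ne\{0\}$, and $pI,qI\subseteq A$. $S$ is a left quotient algebra of $A$ if for all $p,q\in S$ with $p\ne0$ there is $x\in A$ with $xp\ne0$ and $xq\in A$. *)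

theory Defs
  imports Complex_Main
begin

text \<open>An algebra over a field 'k is modelled on a type 'v with scalar multiplication sc
  and bilinear bracket br.  The ambient algebra Q is the whole type 'v.\<close>

definition bilinear_bracket :: "('k::field \<Rightarrow> 'v::ab_group_add \<Rightarrow> 'v) \<Rightarrow> ('v \<Rightarrow> 'v \<Rightarrow> 'v) \<Rightarrow> bool" where
  "bilinear_bracket sc br \<longleftrightarrow>
     (\<forall>x y z. br (x + y) z = br x z + br y z) \<and>
     (\<forall>x y z. br x (y + z) = br x y + br x z) \<and>
     (\<forall>c x y. br (sc c x) y = sc c (br x y)) \<and>
     (\<forall>c x y. br x (sc c y) = sc c (br x y))"

definition symmetric_leibniz :: "('k::field \<Rightarrow> 'v::ab_group_add \<Rightarrow> 'v) \<Rightarrow> ('v \<Rightarrow> 'v \<Rightarrow> 'v) \<Rightarrow> bool" where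
  "symmetric_leibniz sc br \<longleftrightarrow>
     vector_space sc \<and> bilinear_bracket sc br \<and>
     (\<forall>x y z. br x (br y z) = br (br x y) z - br (br x z) y) \<and>
     (\<forall>x y z. br x (br y z) = br (br x y) z + br y (br x z))"

definition subalgebra :: "('k::field \<Rightarrow> 'v::ab_group_add \<Rightarrow> 'v) \<Rightarrow> ('v \<Rightarrow> 'v \<Rightarrow> 'v) \<Rightarrow> 'v set \<Rightarrow> bool" where
  "subalgebra sc br L \<longleftrightarrow> 0 \<in> L \<and> (\<forall>x\<in>L. \<forall>y\<in>L. x + y \<in> L) \<and>
     (\<forall>c. \<forall>x\<in>L. sc c x \<in> L) \<and> (\<forall>x\<in>L. \<forall>y\<in>L. br x y \<in> L)"

definition lie_ideal :: "('k::field \<Rightarrow> 'v::ab_group_add \<Rightarrow> 'v) \<Rightarrow> ('v \<Rightarrow> 'v \<Rightarrow> 'v) \<Rightarrow> 'v set \<Rightarrow> 'v set \<Rightarrow> bool" where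
  "lie_ideal sc br L I \<longleftrightarrow> I \<subseteq> L \<and> 0 \<in> I \<and> (\<forall>x\<in>I. \<forall>y\<in>I. x + y \<in> I) \<and>
     (\<forall>c. \<forall>x\<in>I. sc c x \<in> I) \<and> (\<forall>x\<in>L. \<forall>y\<in>I. br x y \<in> I \<and> br y x \<in> I)"

text \<open>[I,I] is the span of all brackets of elements of I; it is nonzero iff some bracket is nonzero.\<close>
definition semiprime :: "('k::field \<Rightarrow> 'v::ab_group_add \<Rightarrow> 'v) \<Rightarrow> ('v \<Rightarrow> 'v \<Rightarrow> 'v) \<Rightarrow> 'v set \<Rightarrow> bool" where
  "semiprime sc br L \<longleftrightarrow> (\<forall>I. lie_ideal sc br L I \<and> I \<noteq> {0} \<longrightarrow> (\<exists>x\<in>I. \<exists>y\<in>I. br x y \<noteq> 0))"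

definition lanQ :: "('v::ab_group_add \<Rightarrow> 'v \<Rightarrow> 'v) \<Rightarrow> 'v set" where
  "lanQ br = {x. \<forall>y. br x y = 0}"

definition ranQ :: "('v::ab_group_add \<Rightarrow> 'v \<Rightarrow> 'v) \<Rightarrow> 'v set" where
  "ranQ br = {x. \<forall>y. br y x = 0}"

definition Rop :: "('v \<Rightarrow> 'v \<Rightarrow> 'v) \<Rightarrow> 'v \<Rightarrow> 'v \<Rightarrow> 'v" where
  "Rop br x = (\<lambda>u. br u x)"

definition Lop :: "('v \<Rightarrow> 'v \<Rightarrow> 'v) \<Rightarrow> 'v \<Rightarrow> 'v \<Rightarrow> 'v" where
  "Lop br x = (\<lambda>u. br x u)"

inductive_set assoc_gen :: "('k::field \<Rightarrow> 'v::ab_group_add \<Rightarrow> 'v) \<Rightarrow> ('v \<Rightarrow> 'v) set \<Rightarrow> ('v \<Rightarrow> 'v) set"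
  for sc :: "'k::field \<Rightarrow> 'v::ab_group_add \<Rightarrow> 'v" and G :: "('v \<Rightarrow> 'v) set" where
  gen: "f \<in> G \<Longrightarrow> f \<in> assoc_gen sc G"
| zero: "(\<lambda>_. 0) \<in> assoc_gen sc G"
| add: "f \<in> assoc_gen sc G \<Longrightarrow> g \<in> assoc_gen sc G \<Longrightarrow> (\<lambda>v. f v + g v) \<in> assoc_gen sc G"
| smult: "f \<in> assoc_gen sc G \<Longrightarrow> (\<lambda>v. sc c (f v)) \<in> assoc_gen sc G"
| comp: "f \<in> assoc_gen sc G \<Longrightarrow> g \<in> assoc_gen sc G \<Longrightarrow> f \<circ> g \<in> assoc_gen sc G"

definition AQ :: "('k::field \<Rightarrow> 'v::ab_group_add \<Rightarrow> 'v) \<Rightarrow> ('v \<Rightarrow> 'v \<Rightarrow> 'v) \<Rightarrow> ('v \<Rightarrow> 'v) set" where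
  "AQ sc br = assoc_gen sc (range (Rop br) \<union> range (Lop br))"

definition MQ :: "('k::field \<Rightarrow> 'v::ab_group_add \<Rightarrow> 'v) \<Rightarrow> ('v \<Rightarrow> 'v \<Rightarrow> 'v) \<Rightarrow> ('v \<Rightarrow> 'v) set" where
  "MQ sc br = assoc_gen sc (insert id (range (Rop br) \<union> range (Lop br)))"

definition A0 :: "('k::field \<Rightarrow> 'v::ab_group_add \<Rightarrow> 'v) \<Rightarrow> ('v \<Rightarrow> 'v \<Rightarrow> 'v) \<Rightarrow> 'v set \<Rightarrow> ('v \<Rightarrow> 'v) set" where
  "A0 sc br L = {\<mu> \<in> AQ sc br. \<forall>x\<in>L. \<mu> x \<in> L}"

definition dense_in :: "('k::field \<Rightarrow> 'v::ab_group_add \<Rightarrow> 'v) \<Rightarrow> ('v \<Rightarrow> 'v \<Rightarrow> 'v) \<Rightarrow> 'v set \<Rightarrow> bool" where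
  "dense_in sc br L \<longleftrightarrow> (\<forall>\<mu>\<in>MQ sc br. (\<forall>x\<in>L. \<mu> x = 0) \<longrightarrow> \<mu> = (\<lambda>_. 0))"

definition assoc_ideal :: "('k::field \<Rightarrow> 'v::ab_group_add \<Rightarrow> 'v) \<Rightarrow> ('v \<Rightarrow> 'v) set \<Rightarrow> ('v \<Rightarrow> 'v) set \<Rightarrow> bool" where
  "assoc_ideal sc A I \<longleftrightarrow> I \<subseteq> A \<and> (\<lambda>_. 0) \<in> I \<and>
     (\<forall>f\<in>I. \<forall>g\<in>I. (\<lambda>v. f v + g v) \<in> I) \<and> (\<forall>c. \<forall>f\<in>I. (\<lambda>v. sc c (f v)) \<in> I) \<and>
     (\<forall>a\<in>A. \<forall>f\<in>I. a \<circ> f \<in> I \<and> f \<circ> a \<in> I)"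

definition strong_right_ideally_absorbed ::
  "('k::field \<Rightarrow> 'v::ab_group_add \<Rightarrow> 'v) \<Rightarrow> ('v \<Rightarrow> 'v) set \<Rightarrow> ('v \<Rightarrow> 'v) set \<Rightarrow> bool" where
  "strong_right_ideally_absorbed sc S A \<longleftrightarrow>
     (\<forall>p\<in>S - {\<lambda>_. 0}. \<forall>q\<in>S - {\<lambda>_. 0}. \<exists>I. assoc_ideal sc A I \<and>
        {a\<in>A. \<forall>i\<in>I. a \<circ> i = (\<lambda>_. 0)} = {\<lambda>_. 0} \<and>
        ((\<exists>i\<in>I. p \<circ> i \<noteq> (\<lambda>_. 0)) \<or> (\<exists>i\<in>I. q \<circ> i \<noteq> (\<lambda>_. 0))) \<and>
        (\<forall>i\<in>I. p \<circ> i \<in> A \<and> q \<circ> i \<in> A))"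

definition left_quotient_algebra :: "('v::ab_group_add \<Rightarrow> 'v) set \<Rightarrow> ('v \<Rightarrow> 'v) set \<Rightarrow> bool" where
  "left_quotient_algebra S A \<longleftrightarrow>
     (\<forall>p\<in>S. \<forall>q\<in>S. p \<noteq> (\<lambda>_. 0) \<longrightarrow> (\<exists>x\<in>A. x \<circ> p \<noteq> (\<lambda>_. 0) \<and> x \<circ> q \<in> A))"

end

theory Submission
  imports Defs
begin

definition lin :: "('k::field \<Rightarrow> 'v::ab_group_add \<Rightarrow> 'v) \<Rightarrow> ('v \<Rightarrow> 'v) \<Rightarrow> bool" where
  "lin sc f \<longleftrightarrow> (\<forall>x y. f (x + y) = f x + f y) \<and> (\<forall>c x. f (sc c x) = sc c (f x))"

definition ND0 :: "('k::field \<Rightarrow> 'v::ab_group_add \<Rightarrow> 'v) \<Rightarrow> ('v \<Rightarrow> 'v \<Rightarrow> 'v) \<Rightarrow> 'v set \<Rightarrow> ('v \<Rightarrow> 'v) set \<Rightarrow> bool" where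
  "ND0 sc br L W \<longleftrightarrow> (\<forall>b\<in>A0 sc br L. (\<forall>w\<in>W. b \<circ> w = (\<lambda>_. 0)) \<longrightarrow> b = (\<lambda>_. 0))"

definition Wset0 :: "('k::field \<Rightarrow> 'v::ab_group_add \<Rightarrow> 'v) \<Rightarrow> ('v \<Rightarrow> 'v \<Rightarrow> 'v) \<Rightarrow> 'v set \<Rightarrow> ('v \<Rightarrow> 'v) list \<Rightarrow> ('v \<Rightarrow> 'v) set" where
  "Wset0 sc br L Cs = {w \<in> A0 sc br L. \<forall>\<alpha>\<in>set Cs. \<forall>z. (z \<in> A0 sc br L \<or> z = id) \<longrightarrow> \<alpha> \<circ> z \<circ> w \<in> A0 sc br L}"

locale SLA =
  fixes sc :: "'k::field \<Rightarrow> 'v::ab_group_add \<Rightarrow> 'v" and br :: "'v \<Rightarrow> 'v \<Rightarrow> 'v" and L :: "'v set"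
  assumes SL: "symmetric_leibniz sc br"
    and sub: "subalgebra sc br L"
    and dense: "dense_in sc br L"
    and ranz: "ranQ br = {0}" and lanz: "lanQ br = {0}"
begin

lemma vs: "vector_space sc" using SL unfolding symmetric_leibniz_def by blast

lemma bil: "bilinear_bracket sc br" using SL unfolding symmetric_leibniz_def by blast

lemma id1: "br x (br y z) = br (br x y) z - br (br x z) y" using SL unfolding symmetric_leibniz_def by blast
lemma id2: "br x (br y z) = br (br x y) z + br y (br x z)" using SL unfolding symmetric_leibniz_def by blast

lemma br_addl: "br (x + y) z = br x z + br y z" using bil unfolding bilinear_bracket_def by blast
lemma br_addr: "br x (y + z) = br x y + br x z" using bil unfolding bilinear_bracket_def by blast
lemma br_scl: "br (sc c x) y = sc c (br x y)" using bil unfolding bilinear_bracket_def by blast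
lemma br_scr: "br x (sc c y) = sc c (br x y)" using bil unfolding bilinear_bracket_def by blast

lemma br_0l[simp]: "br 0 y = 0"
  using br_addl[of 0 0 y] by simp
lemma br_0r[simp]: "br y 0 = 0"
  using br_addr[of y 0 0] by simp
lemma br_negl: "br (- x) y = - br x y"
  using br_addl[of x "-x" y] by (simp add: eq_neg_iff_add_eq_0 add.commute)
lemma br_negr: "br y (- x) = - br y x"
  using br_addr[of y x "-x"] by (simp add: eq_neg_iff_add_eq_0 add.commute)

lemma sc_add: "sc a (x + y) = sc a x + sc a y" using vs unfolding vector_space_def by blast
lemma sc_sc: "sc a (sc b x) = sc (a*b) x" using vs unfolding vector_space_def by blast
lemma sc_ldist: "sc (a + b) x = sc a x + sc b x" using vs unfolding vector_space_def by blast
lemma sc_one: "sc 1 x = x" using vs unfolding vector_space_def by blast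
lemma sc_0[simp]: "sc a 0 = 0" using sc_add[of a 0 0] by simp
lemma sc_0l[simp]: "sc 0 x = 0" using sc_ldist[of 0 0 x] by simp
lemma sc_m1: "sc (-1) x = - x"
proof -
  have "sc (-1) x + x = 0" using sc_ldist[of "-1" 1 x] sc_one by simp
  thus ?thesis by (simp add: eq_neg_iff_add_eq_0)
qed

lemma br_self: "br y y = 0"
proof -
  have "br y y \<in> ranQ br" unfolding ranQ_def using id1[of _ y y] by simp
  thus ?thesis using ranz by simp
qed

lemma anti: "br x y = - br y x"
proof -
  have "br (x+y) (x+y) = 0" by (rule br_self)
  hence "br x x + br x y + (br y x + br y y) = 0" by (simp add: br_addl br_addr add_ac)
  hence "br x y + br y x = 0" by (simp add: br_self)
  thus ?thesis by (simp add: eq_neg_iff_add_eq_0)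
qed

lemma lin_gen: "f \<in> assoc_gen sc (range (Rop br) \<union> range (Lop br)) \<Longrightarrow> lin sc f"
proof (induction rule: assoc_gen.induct)
  case (gen f) thus ?case by (auto simp: lin_def Rop_def Lop_def br_addl br_addr br_scl br_scr)
next
  case zero thus ?case by (simp add: lin_def)
next
  case (add f g) thus ?case by (simp add: lin_def sc_add algebra_simps)
next
  case (smult f c) thus ?case by (simp add: lin_def sc_add sc_sc mult.commute)
next
  case (comp f g) thus ?case by (simp add: lin_def)
qed

lemma lin_AQ: "f \<in> AQ sc br \<Longrightarrow> lin sc f" unfolding AQ_def by (rule lin_gen)

lemma assoc_gen_mono: "f \<in> assoc_gen sc G \<Longrightarrow> G \<subseteq> H \<Longrightarrow> f \<in> assoc_gen sc H"
  by (induction rule: assoc_gen.induct) (auto intro: assoc_gen.intros)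

lemma AQ_MQ: "f \<in> AQ sc br \<Longrightarrow> f \<in> MQ sc br"
  unfolding AQ_def MQ_def by (erule assoc_gen_mono) auto

lemma lin_sum: "lin sc f \<Longrightarrow> f (sum_list (map h xs)) = sum_list (map (\<lambda>x. f (h x)) xs)"
proof (induction xs)
  case Nil
  then show ?case unfolding lin_def by (metis add_cancel_right_right list.simps(8) sum_list.Nil)
next
  case (Cons a xs) thus ?case by (simp add: lin_def)
qed

lemma sc_sum: "sc c (sum_list (map h xs)) = sum_list (map (\<lambda>x. sc c (h x)) xs)"
  by (induction xs) (simp_all add: sc_add)


definition OK :: "('v \<Rightarrow> 'v) \<Rightarrow> bool" where "OK f \<longleftrightarrow> f \<in> AQ sc br \<or> f = id"

lemma OK_comp: "OK f \<Longrightarrow> OK g \<Longrightarrow> OK (f \<circ> g)"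
  unfolding OK_def AQ_def by (auto intro: assoc_gen.comp)

lemma OK_lin: "OK f \<Longrightarrow> lin sc f"
  unfolding OK_def using lin_AQ by (auto simp: lin_def)

definition ev :: "'v \<Rightarrow> 'v \<Rightarrow> 'k \<times> ('v \<Rightarrow> 'v) \<times> ('v \<Rightarrow> 'v) \<Rightarrow> 'v" where
  "ev w u t = sc (fst t) (fst (snd t) (br w (snd (snd t) u)))"

definition rep :: "('v \<Rightarrow> 'v) \<Rightarrow> ('k \<times> ('v \<Rightarrow> 'v) \<times> ('v \<Rightarrow> 'v)) list \<Rightarrow> bool" where
  "rep q xs \<longleftrightarrow> (\<forall>t\<in>set xs. OK (fst (snd t)) \<and> OK (snd (snd t))) \<and>
     (\<forall>w u. br (q w) u = sum_list (map (ev w u) xs))"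

lemma sum_concat: "sum_list (concat (map F xs)) = sum_list (map (\<lambda>x. sum_list (F x)) xs)"
  by (induction xs) auto

lemma rep_exists: "q \<in> AQ sc br \<Longrightarrow> \<exists>xs. rep q xs"
  unfolding AQ_def
proof (induction rule: assoc_gen.induct)
  case (gen f)
  then show ?case
  proof
    assume "f \<in> range (Rop br)"
    then obtain z where fz: "f = Rop br z" by auto
    have gz: "OK (Lop br z)" unfolding OK_def AQ_def by (auto intro: assoc_gen.gen)
    have "br (br w z) u = br w (br z u) + - br z (br w u)" for w u
      by (metis id2 add_diff_cancel_right' diff_conv_add_uminus)
    hence "rep f [(1, id, Lop br z), (-1, Lop br z, id)]"
      unfolding rep_def using gz
      by (simp add: OK_def ev_def sc_one sc_m1 fz Rop_def Lop_def)
    thus ?case by blast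
  next
    assume "f \<in> range (Lop br)"
    then obtain z where fz: "f = Lop br z" by auto
    have gz: "OK (Lop br z)" unfolding OK_def AQ_def by (auto intro: assoc_gen.gen)
    have "br (br z w) u = br z (br w u) + - br w (br z u)" for w u
      by (metis id2 add_diff_cancel_right' diff_conv_add_uminus)
    hence "rep f [(1, Lop br z, id), (-1, id, Lop br z)]"
      unfolding rep_def using gz
      by (simp add: OK_def ev_def sc_one sc_m1 fz Rop_def Lop_def)
    thus ?case by blast
  qed
next
  case zero
  have "rep (\<lambda>_. 0) []" unfolding rep_def by simp
  thus ?case by blast
next
  case (add f g)
  then obtain xs ys where "rep f xs" "rep g ys" by blast
  hence "rep (\<lambda>v. f v + g v) (xs @ ys)" unfolding rep_def by (auto simp: br_addl)
  thus ?case by blast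
next
  case (smult f c)
  then obtain xs where xs: "rep f xs" by blast
  have "rep (\<lambda>v. sc c (f v)) (map (\<lambda>t. (c * fst t, snd t)) xs)"
    unfolding rep_def
  proof (intro conjI allI)
    show "\<forall>t\<in>set (map (\<lambda>t. (c * fst t, snd t)) xs). OK (fst (snd t)) \<and> OK (snd (snd t))"
      using xs unfolding rep_def by auto
    fix w u
    have "br (sc c (f w)) u = sc c (sum_list (map (ev w u) xs))" using xs unfolding rep_def by (simp add: br_scl)
    also have "\<dots> = sum_list (map (\<lambda>t. sc c (ev w u t)) xs)" by (rule sc_sum)
    also have "\<dots> = sum_list (map (ev w u) (map (\<lambda>t. (c * fst t, snd t)) xs))"
      by (simp add: ev_def sc_sc o_def)
    finally show "br (sc c (f w)) u = sum_list (map (ev w u) (map (\<lambda>t. (c * fst t, snd t)) xs))" .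
  qed
  thus ?case by blast
next
  case (comp f g)
  then obtain xs ys where xs: "rep f xs" and ys: "rep g ys" by blast
  define F where "F = (\<lambda>t::'k \<times> ('v \<Rightarrow> 'v) \<times> ('v \<Rightarrow> 'v). map (\<lambda>s. (fst t * fst s, fst (snd t) \<circ> fst (snd s), snd (snd s) \<circ> snd (snd t))) ys)"
  have "rep (f \<circ> g) (concat (map F xs))"
    unfolding rep_def
  proof (intro conjI allI)
    show "\<forall>t\<in>set (concat (map F xs)). OK (fst (snd t)) \<and> OK (snd (snd t))"
      using xs ys unfolding rep_def F_def by (auto intro: OK_comp)
    fix w u
    have "br ((f \<circ> g) w) u = sum_list (map (ev (g w) u) xs)" using xs unfolding rep_def by simp
    also have "\<dots> = sum_list (map (\<lambda>t. sum_list (map (ev w u) (F t))) xs)"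
    proof (rule arg_cong[where f=sum_list], rule map_cong[OF refl])
      fix t assume t: "t \<in> set xs"
      have l: "lin sc (fst (snd t))" using t xs OK_lin unfolding rep_def by auto
      have "ev (g w) u t = sc (fst t) (fst (snd t) (sum_list (map (ev w (snd (snd t) u)) ys)))"
        using ys unfolding rep_def ev_def by simp
      also have "\<dots> = sc (fst t) (sum_list (map (\<lambda>s. fst (snd t) (ev w (snd (snd t) u) s)) ys))"
        using lin_sum[OF l, of "ev w (snd (snd t) u)" ys] by simp
      also have "\<dots> = sum_list (map (\<lambda>s. sc (fst t) (fst (snd t) (ev w (snd (snd t) u) s))) ys)"
        by (rule sc_sum)
      also have "\<dots> = sum_list (map (ev w u) (F t))"
        unfolding F_def using l by (simp add: o_def ev_def lin_def sc_sc)
      finally show "ev (g w) u t = sum_list (map (ev w u) (F t))" .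
    qed
    also have "\<dots> = sum_list (map (ev w u) (concat (map F xs)))"
      by (simp add: map_concat sum_concat o_def)
    finally show "br ((f \<circ> g) w) u = sum_list (map (ev w u) (concat (map F xs)))" .
  qed
  thus ?case by blast
qed

lemma L0: "0 \<in> L" using sub unfolding subalgebra_def by auto
lemma Ladd: "x \<in> L \<Longrightarrow> y \<in> L \<Longrightarrow> x + y \<in> L" using sub unfolding subalgebra_def by auto
lemma Lsc: "x \<in> L \<Longrightarrow> sc c x \<in> L" using sub unfolding subalgebra_def by auto
lemma Lbr: "x \<in> L \<Longrightarrow> y \<in> L \<Longrightarrow> br x y \<in> L" using sub unfolding subalgebra_def by auto
lemma Lneg: "x \<in> L \<Longrightarrow> - x \<in> L" using Lsc[of x "-1"] sc_m1 by simp
lemma Lsum: "(\<And>t. t \<in> set xs \<Longrightarrow> h t \<in> L) \<Longrightarrow> sum_list (map h xs) \<in> L"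
  by (induction xs) (auto simp: L0 Ladd)

lemma zero_A0: "(\<lambda>_. 0) \<in> A0 sc br L"
  unfolding A0_def AQ_def by (auto intro: assoc_gen.zero simp: L0)
lemma A0_AQ: "f \<in> A0 sc br L \<Longrightarrow> f \<in> AQ sc br" unfolding A0_def by auto
lemma A0_L: "f \<in> A0 sc br L \<Longrightarrow> x \<in> L \<Longrightarrow> f x \<in> L" unfolding A0_def by auto
lemma A0_comp: "f \<in> A0 sc br L \<Longrightarrow> g \<in> A0 sc br L \<Longrightarrow> f \<circ> g \<in> A0 sc br L"
  unfolding A0_def AQ_def by (auto intro: assoc_gen.comp)
lemma AQ_comp: "f \<in> AQ sc br \<Longrightarrow> g \<in> AQ sc br \<Longrightarrow> f \<circ> g \<in> AQ sc br"
  unfolding AQ_def by (auto intro: assoc_gen.comp)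
lemma Lop_AQ: "Lop br y \<in> AQ sc br" unfolding AQ_def by (auto intro: assoc_gen.gen)
lemma Lop_A0: "y \<in> L \<Longrightarrow> Lop br y \<in> A0 sc br L"
  unfolding A0_def using Lop_AQ by (auto simp: Lop_def Lbr)

abbreviation "ND \<equiv> ND0 sc br L"
abbreviation "Wset \<equiv> Wset0 sc br L"
lemmas ND_def = ND0_def[of sc br L]
lemmas Wset_def = Wset0_def[of sc br L]

lemma ND_use: "ND W \<Longrightarrow> b \<in> A0 sc br L \<Longrightarrow> (\<And>w. w \<in> W \<Longrightarrow> b \<circ> w = (\<lambda>_. 0)) \<Longrightarrow> b = (\<lambda>_. 0)"
  unfolding ND_def by blast

lemma ND_use2: "{b\<in>A0 sc br L. \<forall>i\<in>I. b \<circ> i = (\<lambda>_. 0)} = {\<lambda>_. 0} \<Longrightarrow> ND I"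
  unfolding ND_def by blast

lemma ND_Wset:
  assumes I0: "\<And>a. OK a \<Longrightarrow> \<exists>I. assoc_ideal sc (A0 sc br L) I \<and> ND I \<and> (\<forall>i\<in>I. a \<circ> i \<in> A0 sc br L)"
    and base: "ND (A0 sc br L)"
  shows "(\<forall>\<alpha>\<in>set Cs. OK \<alpha>) \<Longrightarrow> ND (Wset Cs)"
proof (induction Cs)
  case Nil
  then show ?case using base unfolding Wset_def by simp
next
  case (Cons a Cs)
  hence IH: "ND (Wset Cs)" and oka: "OK a" by auto
  obtain I where I: "assoc_ideal sc (A0 sc br L) I" "ND I" "\<forall>i\<in>I. a \<circ> i \<in> A0 sc br L"
    using I0[OF oka] by blast
  have IA: "I \<subseteq> A0 sc br L" using I(1) unfolding assoc_ideal_def by auto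
  have Iid: "\<And>x f. x \<in> A0 sc br L \<Longrightarrow> f \<in> I \<Longrightarrow> x \<circ> f \<in> I" using I(1) unfolding assoc_ideal_def by auto
  have mem: "w \<circ> i \<in> Wset (a # Cs)" if w: "w \<in> Wset Cs" and i: "i \<in> I" for w i
  proof -
    have wA: "w \<in> A0 sc br L" using w unfolding Wset_def by auto
    have iA: "i \<in> A0 sc br L" using i IA by auto
    have "\<alpha> \<circ> z \<circ> (w \<circ> i) \<in> A0 sc br L" if al: "\<alpha> \<in> set (a # Cs)" and z: "z \<in> A0 sc br L \<or> z = id" for \<alpha> z
    proof (cases "\<alpha> = a")
      case True
      have "z \<circ> w \<in> A0 sc br L" using z wA A0_comp by auto
      hence "(z \<circ> w) \<circ> i \<in> I" using Iid i by blast
      hence "a \<circ> ((z \<circ> w) \<circ> i) \<in> A0 sc br L" using I(3) by blast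
      thus ?thesis using True by (simp add: o_assoc)
    next
      case False
      hence "\<alpha> \<in> set Cs" using al by auto
      hence "\<alpha> \<circ> z \<circ> w \<in> A0 sc br L" using w z unfolding Wset_def by blast
      hence "(\<alpha> \<circ> z \<circ> w) \<circ> i \<in> A0 sc br L" using A0_comp iA by blast
      thus ?thesis by (simp add: o_assoc)
    qed
    moreover have "w \<circ> i \<in> A0 sc br L" using A0_comp wA iA by blast
    ultimately show ?thesis unfolding Wset_def by blast
  qed
  show ?case unfolding ND_def
  proof (intro ballI impI)
    fix b assume b: "b \<in> A0 sc br L" and h: "\<forall>w\<in>Wset (a # Cs). b \<circ> w = (\<lambda>_. 0)"
    have "b \<circ> w = (\<lambda>_. 0)" if w: "w \<in> Wset Cs" for w
    proof -
      have "b \<circ> w \<in> A0 sc br L" using b w A0_comp unfolding Wset_def by blast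
      moreover have "\<forall>i\<in>I. (b \<circ> w) \<circ> i = (\<lambda>_. 0)" using h mem w by (metis comp_assoc)
      ultimately show ?thesis using I(2) unfolding ND_def by blast
    qed
    thus "b = (\<lambda>_. 0)" using IH b unfolding ND_def by blast
  qed
qed

lemma key_left:
  assumes q: "rep q xs" and qA: "q \<in> AQ sc br"
    and u: "u \<in> Wset (map (fst \<circ> snd) xs @ map (snd \<circ> snd) xs)"
    and w: "w \<in> Wset (map (fst \<circ> snd) xs @ map (snd \<circ> snd) xs)"
    and l0: "l0 \<in> L"
  shows "Lop br (u (w l0)) \<circ> q \<in> A0 sc br L"
proof -
  let ?Cs = "map (fst \<circ> snd) xs @ map (snd \<circ> snd) xs"
  have uA: "u \<in> A0 sc br L" and wA: "w \<in> A0 sc br L" using u w unfolding Wset_def by auto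
  have "br (u (w l0)) (q l) \<in> L" if l: "l \<in> L" for l
  proof -
    have "br (u (w l0)) (q l) = - sum_list (map (ev l (u (w l0))) xs)"
      using q anti unfolding rep_def by metis
    moreover have "sum_list (map (ev l (u (w l0))) xs) \<in> L"
    proof (rule Lsum)
      fix t assume t: "t \<in> set xs"
      have bu: "snd (snd t) \<circ> id \<circ> u \<in> A0 sc br L"
        using u t unfolding Wset_def by auto
      hence "Lop br l \<circ> (snd (snd t) \<circ> u) \<in> A0 sc br L" using A0_comp Lop_A0[OF l] by simp
      hence "fst (snd t) \<circ> (Lop br l \<circ> (snd (snd t) \<circ> u)) \<circ> w \<in> A0 sc br L"
        using w t unfolding Wset_def by auto
      hence "(fst (snd t) \<circ> (Lop br l \<circ> (snd (snd t) \<circ> u)) \<circ> w) l0 \<in> L" using A0_L l0 by blast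
      hence "fst (snd t) (br l (snd (snd t) (u (w l0)))) \<in> L" by (simp add: Lop_def)
      thus "ev l (u (w l0)) t \<in> L" unfolding ev_def by (rule Lsc)
    qed
    ultimately show ?thesis using Lneg by simp
  qed
  moreover have "Lop br (u (w l0)) \<circ> q \<in> AQ sc br" using AQ_comp Lop_AQ qA by blast
  ultimately show ?thesis unfolding A0_def by (simp add: Lop_def)
qed


lemma main:
  assumes ab: "strong_right_ideally_absorbed sc (AQ sc br) (A0 sc br L)"
    and pA: "p \<in> AQ sc br" and qA: "q \<in> AQ sc br" and p0: "p \<noteq> (\<lambda>_. 0)"
  shows "\<exists>x\<in>A0 sc br L. x \<circ> p \<noteq> (\<lambda>_. 0) \<and> x \<circ> q \<in> A0 sc br L"
proof -
  have abs: "\<And>a. a \<in> AQ sc br \<Longrightarrow> a \<noteq> (\<lambda>_. 0) \<Longrightarrow> \<exists>I. assoc_ideal sc (A0 sc br L) I \<and> ND I \<and>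
      (\<exists>i\<in>I. a \<circ> i \<noteq> (\<lambda>_. 0)) \<and> (\<forall>i\<in>I. a \<circ> i \<in> A0 sc br L)"
  proof -
    fix a assume a: "a \<in> AQ sc br" "a \<noteq> (\<lambda>_. 0)"
    obtain I where I: "assoc_ideal sc (A0 sc br L) I"
      "{b\<in>A0 sc br L. \<forall>i\<in>I. b \<circ> i = (\<lambda>_. 0)} = {\<lambda>_. 0}"
      "(\<exists>i\<in>I. a \<circ> i \<noteq> (\<lambda>_. 0)) \<or> (\<exists>i\<in>I. a \<circ> i \<noteq> (\<lambda>_. 0))"
      "\<forall>i\<in>I. a \<circ> i \<in> A0 sc br L \<and> a \<circ> i \<in> A0 sc br L"
    proof -
      have aS: "a \<in> AQ sc br - {\<lambda>_. 0}" using a by simp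
      have "\<forall>p\<in>AQ sc br - {\<lambda>_. 0}. \<forall>q\<in>AQ sc br - {\<lambda>_. 0}. \<exists>I. assoc_ideal sc (A0 sc br L) I \<and>
        {a\<in>A0 sc br L. \<forall>i\<in>I. a \<circ> i = (\<lambda>_. 0)} = {\<lambda>_. 0} \<and>
        ((\<exists>i\<in>I. p \<circ> i \<noteq> (\<lambda>_. 0)) \<or> (\<exists>i\<in>I. q \<circ> i \<noteq> (\<lambda>_. 0))) \<and>
        (\<forall>i\<in>I. p \<circ> i \<in> A0 sc br L \<and> q \<circ> i \<in> A0 sc br L)"
        using ab unfolding strong_right_ideally_absorbed_def .
      from bspec[OF bspec[OF this aS] aS] show ?thesis by (elim exE) (rule that, blast+)
    qed
    have "ND I" using I(2) by (rule ND_use2)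
    thus "\<exists>I. assoc_ideal sc (A0 sc br L) I \<and> ND I \<and>
      (\<exists>i\<in>I. a \<circ> i \<noteq> (\<lambda>_. 0)) \<and> (\<forall>i\<in>I. a \<circ> i \<in> A0 sc br L)" using I by blast
  qed
  obtain Ip where Ip: "assoc_ideal sc (A0 sc br L) Ip" "ND Ip" "\<exists>i\<in>Ip. p \<circ> i \<noteq> (\<lambda>_. 0)"
    "\<forall>i\<in>Ip. p \<circ> i \<in> A0 sc br L" using abs[OF pA p0] by blast
  have IpA: "Ip \<subseteq> A0 sc br L" using Ip(1) unfolding assoc_ideal_def by auto
  have I0: "\<exists>I. assoc_ideal sc (A0 sc br L) I \<and> ND I \<and> (\<forall>i\<in>I. a \<circ> i \<in> A0 sc br L)" if "OK a" for a
  proof (cases "a \<in> AQ sc br \<and> a \<noteq> (\<lambda>_. 0)")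
    case True thus ?thesis using abs by blast
  next
    case False
    hence "a = id \<or> a = (\<lambda>_. 0)" using that unfolding OK_def by blast
    hence "\<forall>i\<in>Ip. a \<circ> i \<in> A0 sc br L" using IpA zero_A0 by (auto simp: o_def)
    thus ?thesis using Ip by blast
  qed
  have base: "ND (A0 sc br L)" unfolding ND_def
  proof (intro ballI impI)
    fix b assume "b \<in> A0 sc br L" "\<forall>w\<in>A0 sc br L. b \<circ> w = (\<lambda>_. 0)"
    thus "b = (\<lambda>_. 0)" using ND_use[OF Ip(2)] IpA by blast
  qed
  obtain xs where xs: "rep q xs" using rep_exists[OF qA] by blast
  define Cs where "Cs = map (fst \<circ> snd) xs @ map (snd \<circ> snd) xs"
  have okCs: "\<forall>\<alpha>\<in>set Cs. OK \<alpha>" using xs unfolding rep_def Cs_def by auto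
  have NDW: "ND (Wset Cs)" by (rule ND_Wset[OF I0 base okCs])
  show ?thesis
  proof (rule ccontr)
    assume neg: "\<not> ?thesis"
    have none: "\<And>u w l0. u \<in> Wset Cs \<Longrightarrow> w \<in> Wset Cs \<Longrightarrow> l0 \<in> L \<Longrightarrow>
        Lop br (u (w l0)) \<circ> p = (\<lambda>_. 0)"
    proof -
      fix u w l0 assume u: "u \<in> Wset Cs" and w: "w \<in> Wset Cs" and l0: "l0 \<in> L"
      have uA: "u \<in> A0 sc br L" and wA: "w \<in> A0 sc br L" using u w unfolding Wset_def by auto
      have xA: "Lop br (u (w l0)) \<in> A0 sc br L" using Lop_A0 A0_L[OF uA A0_L[OF wA l0]] by blast
      have "Lop br (u (w l0)) \<circ> q \<in> A0 sc br L"
        using key_left[OF xs qA u[unfolded Cs_def] w[unfolded Cs_def] l0] .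
      thus "Lop br (u (w l0)) \<circ> p = (\<lambda>_. 0)" using neg xA by blast
    qed
    obtain i where i: "i \<in> Ip" "p \<circ> i \<noteq> (\<lambda>_. 0)" using Ip(3) by blast
    have piA: "p \<circ> i \<in> A0 sc br L" using Ip(4) i by blast
    obtain l1 where l1: "l1 \<in> L" "p (i l1) \<noteq> 0"
    proof -
      have "\<exists>l\<in>L. (p \<circ> i) l \<noteq> 0"
      proof (rule ccontr)
        assume "\<not> (\<exists>l\<in>L. (p \<circ> i) l \<noteq> 0)"
        hence "p \<circ> i = (\<lambda>_. 0)" using dense AQ_MQ[OF A0_AQ[OF piA]] unfolding dense_in_def by blast
        thus False using i(2) by simp
      qed
      thus ?thesis using that by auto
    qed
    define w' where "w' = p (i l1)"
    have w'L: "w' \<in> L" using A0_L[OF piA l1(1)] unfolding w'_def by simp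
    have bA: "Lop br w' \<in> A0 sc br L" using Lop_A0[OF w'L] .
    have kill: "Lop br w' \<circ> u \<circ> w = (\<lambda>_. 0)" if u: "u \<in> Wset Cs" and w: "w \<in> Wset Cs" for u w
    proof -
      have uA: "u \<in> A0 sc br L" and wA: "w \<in> A0 sc br L" using u w unfolding Wset_def by auto
      have cA: "Lop br w' \<circ> u \<circ> w \<in> A0 sc br L" using bA uA wA A0_comp by blast
      moreover have "(Lop br w' \<circ> u \<circ> w) l0 = 0" if l0: "l0 \<in> L" for l0
      proof -
        have "(Lop br (u (w l0)) \<circ> p) (i l1) = 0" using none[OF u w l0] by simp
        hence "br (u (w l0)) w' = 0" unfolding w'_def Lop_def by simp
        thus ?thesis using anti[of w' "u (w l0)"] by (simp add: Lop_def)
      qed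
      ultimately show ?thesis using dense AQ_MQ[OF A0_AQ[OF cA]] unfolding dense_in_def by blast
    qed
    have "Lop br w' \<circ> u = (\<lambda>_. 0)" if u: "u \<in> Wset Cs" for u
    proof -
      have "Lop br w' \<circ> u \<in> A0 sc br L" using bA u A0_comp unfolding Wset_def by blast
      thus ?thesis using ND_use[OF NDW] kill[OF u] by blast
    qed
    hence Lw: "Lop br w' = (\<lambda>_. 0)" using ND_use[OF NDW bA] by blast
    have "w' \<in> lanQ br" using fun_cong[OF Lw] by (simp add: lanQ_def Lop_def)
    hence "w' = 0" using lanz by simp
    thus False using l1(2) unfolding w'_def by simp
  qed
qed

end

theorem corollary6p10:
  fixes sc :: "'k::field \<Rightarrow> 'v::ab_group_add \<Rightarrow> 'v" and br :: "'v \<Rightarrow> 'v \<Rightarrow> 'v" and L :: "'v set"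
  assumes "symmetric_leibniz sc br"
    and "subalgebra sc br L"
    and "dense_in sc br L"
    and "semiprime sc br L"
    and "ranQ br = {0}" and "lanQ br = {0}"
    and "strong_right_ideally_absorbed sc (AQ sc br) (A0 sc br L)"
  shows "left_quotient_algebra (AQ sc br) (A0 sc br L)"
proof -
  interpret SLA sc br L
    using assms(1,2,3,5,6) by (rule SLA.intro)
  show ?thesis unfolding left_quotient_algebra_def
  proof (intro ballI impI)
    fix p q assume "p \<in> AQ sc br" "q \<in> AQ sc br" "p \<noteq> (\<lambda>_. 0)"
    then show "\<exists>x\<in>A0 sc br L. x \<circ> p \<noteq> (\<lambda>_. 0) \<and> x \<circ> q \<in> A0 sc br L"
      by (rule main[OF assms(7)])
  qed
qed

end
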